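(* Let $k$ be a positive integer, $a\ge k+2$ an integer and $G=K_a\,\square\,K_a$. Then $\gamma_{P,k}(G-e)=a-k-1$ for every edge $e$ of $G$.
   Context: $K_a$ is the complete graph on $a$ vertices, $\square$ denotes the Cartesian product of graphs, and $G-e$ is obtained by deleting the edge $e$. $N_G[v]$ is the closed neighbourhood of $v$, and $N_G[S]$ the union of closed neighbourhoods of vertices of $S$. For $S\subseteq V(G)$, define $\mathcal{P}^{0}_{G,k}(S)=N_G[S]$ and $\mathcal{P}^{i+1}_{G,k}(S)=\bigcup\{N_G[v] : v\in \mathcal{P}^{i}_{G,k}(S),\ |N_G[v]\setminus \mathcal{P}^{i}_{G,k}(S)|\le k\}$; these increase and stabilize to $\mathcal{P}^{\infty}_{G,k}(S)$. $S$ is a $k$-power dominating set if $\mathcal{P}^{\infty}_{G,k}(S)=V(G)$; $\gamma_{P,k}(G)$ is the minimum size of such a set. *)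

theory Defs
  imports Main
begin

text \<open>A finite simple graph is represented by a vertex set V and an edge set E,
each edge being a 2-element subset of V.\<close>

definition cnbhd :: "'a set \<Rightarrow> 'a set set \<Rightarrow> 'a \<Rightarrow> 'a set" where
  "cnbhd V E v = {v} \<union> {u\<in>V. {u, v} \<in> E}"

definition cnbhd_set :: "'a set \<Rightarrow> 'a set set \<Rightarrow> 'a set \<Rightarrow> 'a set" where
  "cnbhd_set V E S = (\<Union>v\<in>S. cnbhd V E v)"

fun pd_step :: "'a set \<Rightarrow> 'a set set \<Rightarrow> nat \<Rightarrow> 'a set \<Rightarrow> nat \<Rightarrow> 'a set" where
  "pd_step V E k S 0 = cnbhd_set V E S"
| "pd_step V E k S (Suc i) =
     (\<Union>{cnbhd V E v | v. v \<in> pd_step V E k S i \<and>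
                          card (cnbhd V E v - pd_step V E k S i) \<le> k})"

definition pd_closure :: "'a set \<Rightarrow> 'a set set \<Rightarrow> nat \<Rightarrow> 'a set \<Rightarrow> 'a set" where
  "pd_closure V E k S = (\<Union>i. pd_step V E k S i)"

definition k_power_dominating :: "'a set \<Rightarrow> 'a set set \<Rightarrow> nat \<Rightarrow> 'a set \<Rightarrow> bool" where
  "k_power_dominating V E k S \<longleftrightarrow> S \<subseteq> V \<and> pd_closure V E k S = V"

definition k_power_domination_number :: "'a set \<Rightarrow> 'a set set \<Rightarrow> nat \<Rightarrow> nat" where
  "k_power_domination_number V E k =
     (LEAST n. \<exists>S. k_power_dominating V E k S \<and> card S = n)"

text \<open>The rook's graph K_a \<box> K_a on vertex set {0..<a} \<times> {0..<a}.\<close>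
definition rook_vertices :: "nat \<Rightarrow> (nat \<times> nat) set" where
  "rook_vertices a = {0..<a} \<times> {0..<a}"

definition rook_edges :: "nat \<Rightarrow> (nat \<times> nat) set set" where
  "rook_edges a = {{x, y} | x y. x \<in> rook_vertices a \<and> y \<in> rook_vertices a \<and> x \<noteq> y \<and>
                     (fst x = fst y \<or> snd x = snd y)}"

end

theory Submission imports Defs begin

lemma cnbhd_sub: "cnbhd V E v \<subseteq> insert v V"
  unfolding cnbhd_def by auto

lemma cnbhd_finite: "finite V \<Longrightarrow> finite (cnbhd V E v)"
  using cnbhd_sub finite_subset by (metis finite_insert)

lemma self_in_cnbhd: "v \<in> cnbhd V E v"
  unfolding cnbhd_def by auto

lemma pd_step_V: "S \<subseteq> V \<Longrightarrow> pd_step V E k S i \<subseteq> V"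
proof (induction i)
  case 0 then show ?case using cnbhd_sub[of V E] by (fastforce simp: cnbhd_set_def)
next
  case (Suc i) then show ?case using cnbhd_sub[of V E] by fastforce
qed

lemma pd_step_inv: "w \<in> pd_step V E k S i \<Longrightarrow> \<exists>v. w \<in> cnbhd V E v \<and> cnbhd V E v \<subseteq> pd_step V E k S i"
proof (induction i arbitrary: w)
  case 0 then show ?case by (auto simp: cnbhd_set_def)
next
  case (Suc i) then show ?case by auto
qed

lemma pd_step_Suc_I:
  assumes "v \<in> pd_step V E k S i" "card (cnbhd V E v - pd_step V E k S i) \<le> k"
  shows "cnbhd V E v \<subseteq> pd_step V E k S (Suc i)"
proof
  fix w assume w: "w \<in> cnbhd V E v"
  have "cnbhd V E v \<in> {cnbhd V E v | v. v \<in> pd_step V E k S i \<and> card (cnbhd V E v - pd_step V E k S i) \<le> k}"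
    using assms by blast
  then show "w \<in> pd_step V E k S (Suc i)" unfolding pd_step.simps using w by (rule UnionI)
qed

lemma pd_step_mono_Suc: "pd_step V E k S i \<subseteq> pd_step V E k S (Suc i)"
proof
  fix w assume "w \<in> pd_step V E k S i"
  then obtain v where v: "w \<in> cnbhd V E v" "cnbhd V E v \<subseteq> pd_step V E k S i"
    using pd_step_inv by metis
  have "v \<in> pd_step V E k S i" using v(2) self_in_cnbhd[of v V E] by (rule subsetD)
  moreover have "cnbhd V E v - pd_step V E k S i = {}" using v(2) by (rule Diff_eq_empty_iff[THEN iffD2])
  ultimately have "cnbhd V E v \<subseteq> pd_step V E k S (Suc i)" by (intro pd_step_Suc_I) (simp_all only: card.empty le0)
  then show "w \<in> pd_step V E k S (Suc i)" using v(1) by (rule subsetD)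
qed

lemma pd_step_mono: "i \<le> j \<Longrightarrow> pd_step V E k S i \<subseteq> pd_step V E k S j"
  by (rule lift_Suc_mono_le[of "\<lambda>i. pd_step V E k S i"]) (rule pd_step_mono_Suc)

lemma pd_force:
  assumes "finite V" "X \<subseteq> pd_step V E k S i" "v \<in> X" "card (cnbhd V E v - X) \<le> k"
  shows "cnbhd V E v \<subseteq> pd_step V E k S (Suc i)"
proof -
  have "card (cnbhd V E v - pd_step V E k S i) \<le> card (cnbhd V E v - X)"
    by (rule card_mono) (use assms cnbhd_finite[of V E v] in auto)
  then have "card (cnbhd V E v - pd_step V E k S i) \<le> k" using assms by linarith
  moreover have "v \<in> pd_step V E k S i" using assms by blast
  ultimately show ?thesis by (intro pd_step_Suc_I)
qed

lemma pd_closed_bound: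
  assumes "finite V" "cnbhd_set V E S \<subseteq> T"
    and cl: "\<And>v. v \<in> T \<Longrightarrow> card (cnbhd V E v - T) \<le> k \<Longrightarrow> cnbhd V E v \<subseteq> T"
  shows "pd_step V E k S i \<subseteq> T"
proof (induction i)
  case 0 then show ?case using assms by simp
next
  case (Suc i)
  show ?case
  proof
    fix w assume "w \<in> pd_step V E k S (Suc i)"
    then obtain v where v: "w \<in> cnbhd V E v" "v \<in> pd_step V E k S i"
      "card (cnbhd V E v - pd_step V E k S i) \<le> k" by auto
    have "card (cnbhd V E v - T) \<le> card (cnbhd V E v - pd_step V E k S i)"
      by (rule card_mono) (use Suc cnbhd_finite[of V E v] assms in auto)
    then show "w \<in> T" using cl[of v] v Suc by auto
  qed
qed


lemma rook_fin: "finite (rook_vertices a)"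
  unfolding rook_vertices_def by simp

lemma rook_adj: "{u,v} \<in> rook_edges a \<longleftrightarrow> u \<in> rook_vertices a \<and> v \<in> rook_vertices a \<and> u \<noteq> v \<and> (fst u = fst v \<or> snd u = snd v)"
proof
  assume "{u,v} \<in> rook_edges a"
  then obtain x y where xy: "{u,v} = {x,y}" "x \<in> rook_vertices a" "y \<in> rook_vertices a" "x \<noteq> y"
    "fst x = fst y \<or> snd x = snd y" unfolding rook_edges_def by blast
  from xy(1) have "(u = x \<and> v = y) \<or> (u = y \<and> v = x)" by (simp add: doubleton_eq_iff)
  then show "u \<in> rook_vertices a \<and> v \<in> rook_vertices a \<and> u \<noteq> v \<and> (fst u = fst v \<or> snd u = snd v)"
    using xy by auto
next
  assume "u \<in> rook_vertices a \<and> v \<in> rook_vertices a \<and> u \<noteq> v \<and> (fst u = fst v \<or> snd u = snd v)"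
  then show "{u,v} \<in> rook_edges a" unfolding rook_edges_def by blast
qed

lemma nb: "u \<in> cnbhd (rook_vertices a) (rook_edges a - {e}) v \<longleftrightarrow>
  u = v \<or> (u \<in> rook_vertices a \<and> v \<in> rook_vertices a \<and> u \<noteq> v \<and> (fst u = fst v \<or> snd u = snd v) \<and> {u,v} \<noteq> e)"
  unfolding cnbhd_def using rook_adj[of u v a] by auto

lemma rv: "p \<in> rook_vertices a \<longleftrightarrow> fst p < a \<and> snd p < a"
  unfolding rook_vertices_def by (cases p) auto

lemma lower:
  assumes "S \<subseteq> rook_vertices a" "card S + k + 2 \<le> a"
  shows "pd_closure (rook_vertices a) (rook_edges a - {e}) k S \<noteq> rook_vertices a"
proof -
  define V where "V = rook_vertices a"
  define E where "E = rook_edges a - {e}"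
  define T where "T = {p \<in> V. fst p \<in> fst ` S \<or> snd p \<in> snd ` S}"
  have finS: "finite S" using assms(1) rook_fin finite_subset by blast
  define U1 where "U1 = {0..<a} - fst ` S"
  define U2 where "U2 = {0..<a} - snd ` S"
  have cU1: "card U1 \<ge> k + 2"
  proof -
    have "card {0..<a} - card (fst ` S) \<le> card U1" unfolding U1_def
      by (rule diff_card_le_card_Diff) (use finS in auto)
    moreover have "card (fst ` S) \<le> card S" using card_image_le finS by blast
    ultimately show ?thesis using assms(2) by simp
  qed
  have cU2: "card U2 \<ge> k + 2"
  proof -
    have "card {0..<a} - card (snd ` S) \<le> card U2" unfolding U2_def
      by (rule diff_card_le_card_Diff) (use finS in auto)
    moreover have "card (snd ` S) \<le> card S" using card_image_le finS by blast
    ultimately show ?thesis using assms(2) by simp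
  qed
  have fU1: "finite U1" "finite U2" unfolding U1_def U2_def by auto
  have sub: "\<And>x y. {x, v} = e \<Longrightarrow> {y, v} = e \<Longrightarrow> x = y" for v :: "nat \<times> nat"
    by (auto simp: doubleton_eq_iff)
  have cex0: "{x. {x, v} = e} = {} \<or> (\<exists>x0. {x. {x, v} = e} = {x0})" for v :: "nat \<times> nat"
  proof (cases "\<exists>x. {x,v} = e")
    case True
    then obtain x0 where "{x0,v} = e" by blast
    then have "{x. {x, v} = e} = {x0}" using sub[of _ v] by blast
    then show ?thesis by blast
  qed auto
  have cex: "card {x. {x, v} = e} \<le> 1" for v :: "nat \<times> nat"
  proof -
    from cex0[of v] show ?thesis
    proof
      assume h: "{x. {x, v} = e} = {}" show ?thesis by (subst h) simp
    next
      assume "\<exists>x0. {x. {x, v} = e} = {x0}"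
      then obtain x0 where h: "{x. {x, v} = e} = {x0}" by blast
      show ?thesis by (subst h) simp
    qed
  qed
  have cexf: "finite {x. {x, v} = e}" for v :: "nat \<times> nat"
  proof -
    from cex0[of v] show ?thesis
    proof
      assume h: "{x. {x, v} = e} = {}" show ?thesis by (subst h) simp
    next
      assume "\<exists>x0. {x. {x, v} = e} = {x0}"
      then obtain x0 where h: "{x. {x, v} = e} = {x0}" by blast
      show ?thesis by (subst h) simp
    qed
  qed
  have finV: "finite V" unfolding V_def by (rule rook_fin)
  have stepT: "pd_step V E k S i \<subseteq> T" for i
  proof (rule pd_closed_bound)
    show "finite V" by (rule finV)
    show "cnbhd_set V E S \<subseteq> T"
    proof
      fix w assume "w \<in> cnbhd_set V E S"
      then obtain s where s: "s \<in> S" "w \<in> cnbhd V E s" unfolding cnbhd_set_def by auto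
      then have "w = s \<or> (w \<in> V \<and> (fst w = fst s \<or> snd w = snd s))"
        unfolding V_def E_def nb by auto
      then show "w \<in> T" unfolding T_def using s assms(1) V_def by (auto simp: image_iff)
    qed
  next
    fix v assume vT: "v \<in> T" and ck: "card (cnbhd V E v - T) \<le> k"
    show "cnbhd V E v \<subseteq> T"
    proof (rule ccontr)
      assume "\<not> cnbhd V E v \<subseteq> T"
      then obtain w where w: "w \<in> cnbhd V E v" "w \<notin> T" by blast
      have wv: "w \<noteq> v" using w vT by blast
      have wV: "w \<in> V" "fst w = fst v \<or> snd w = snd v" using w wv unfolding V_def E_def nb by auto
      have fin: "finite (cnbhd V E v - T)" using cnbhd_finite[of V E v] finV by auto
      show False
      proof (cases "fst w = fst v")
        case True
        define A where "A = (\<lambda>j. (fst v, j)) ` U2"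
        have cA: "card A = card U2" unfolding A_def by (rule card_image) (auto simp: inj_on_def)
        have "A - {x. {x, v} = e} \<subseteq> cnbhd V E v - T"
        proof
          fix p assume p: "p \<in> A - {x. {x, v} = e}"
          have pA: "p \<in> A" and pe: "{p,v} \<noteq> e" using p by blast+
          have f1: "fst v \<notin> fst ` S" using w True wV unfolding T_def by auto
          have "snd v \<in> snd ` S" using vT f1 unfolding T_def by auto
          moreover have "snd p \<notin> snd ` S" "fst p = fst v" "snd p < a" using pA unfolding A_def U2_def by (force, force, force)
          moreover have "fst v < a" using vT unfolding T_def V_def rv by auto
          ultimately have pv: "p \<noteq> v" "p \<in> V" "v \<in> V" "{p,v} \<noteq> e" "p \<notin> T"
            using pe f1 vT unfolding V_def T_def rv by auto
          have "p \<in> cnbhd V E v" unfolding V_def E_def nb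
            using pv(1-4) \<open>fst p = fst v\<close> unfolding V_def by blast
          then show "p \<in> cnbhd V E v - T" using pv(5) by blast
        qed
        then have "card (A - {x. {x, v} = e}) \<le> card (cnbhd V E v - T)"
          using fin card_mono by blast
        moreover have "card A - card {x. {x, v} = e} \<le> card (A - {x. {x, v} = e})"
          by (rule diff_card_le_card_Diff, rule cexf)
        ultimately show False using cA cU2 cex[of v] ck by linarith
      next
        case False
        then have sv: "snd w = snd v" using wV by auto
        define A where "A = (\<lambda>i. (i, snd v)) ` U1"
        have cA: "card A = card U1" unfolding A_def by (rule card_image) (auto simp: inj_on_def)
        have "A - {x. {x, v} = e} \<subseteq> cnbhd V E v - T"
        proof
          fix p assume p: "p \<in> A - {x. {x, v} = e}"
          have pA: "p \<in> A" and pe: "{p,v} \<noteq> e" using p by blast+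
          have f1: "snd v \<notin> snd ` S" using w sv wV unfolding T_def by auto
          have "fst v \<in> fst ` S" using vT f1 unfolding T_def by auto
          moreover have "fst p \<notin> fst ` S" "snd p = snd v" "fst p < a" using pA unfolding A_def U1_def by (force, force, force)
          moreover have "snd v < a" using vT unfolding T_def V_def rv by auto
          ultimately have pv: "p \<noteq> v" "p \<in> V" "v \<in> V" "{p,v} \<noteq> e" "p \<notin> T"
            using pe f1 vT unfolding V_def T_def rv by auto
          have "p \<in> cnbhd V E v" unfolding V_def E_def nb
            using pv(1-4) \<open>snd p = snd v\<close> unfolding V_def by blast
          then show "p \<in> cnbhd V E v - T" using pv(5) by blast
        qed
        then have "card (A - {x. {x, v} = e}) \<le> card (cnbhd V E v - T)"
          using fin card_mono by blast
        moreover have "card A - card {x. {x, v} = e} \<le> card (A - {x. {x, v} = e})"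
          by (rule diff_card_le_card_Diff, rule cexf)
        ultimately show False using cA cU1 cex[of v] ck by linarith
      qed
    qed
  qed
  obtain i0 where "i0 \<in> U1" using cU1 by fastforce
  obtain j0 where "j0 \<in> U2" using cU2 by fastforce
  then have "(i0, j0) \<in> V - T" using \<open>i0 \<in> U1\<close> unfolding V_def T_def U1_def U2_def by (auto simp: rv)
  moreover have "pd_closure V E k S \<subseteq> T" unfolding pd_closure_def using stepT by blast
  ultimately show ?thesis unfolding V_def E_def by blast
qed


lemma nbI: "u \<in> rook_vertices a \<Longrightarrow> v \<in> rook_vertices a \<Longrightarrow> fst u = fst v \<or> snd u = snd v \<Longrightarrow> {u,v} \<noteq> e
  \<Longrightarrow> u \<in> cnbhd (rook_vertices a) (rook_edges a - {e}) v"
  unfolding nb by blast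

lemma upper_row:
  assumes k1: "k \<ge> 1" and ak: "a \<ge> k + 2" and rc: "r < a" "c1 < a" "c2 < a" "c1 \<noteq> c2"
  shows "\<exists>S. k_power_dominating (rook_vertices a) (rook_edges a - {{(r,c1),(r,c2)}}) k S \<and> card S = a - k - 1"
proof -
  define m where "m = a - k - 1"
  define V where "V = rook_vertices a"
  define e where "e = {(r,c1),(r,c2)}"
  define E where "E = rook_edges a - {e}"
  have finV: "finite V" unfolding V_def by (rule rook_fin)
  have "card ({0..<a} - {r}) = a - 1" using rc by simp
  then have "m \<le> card ({0..<a} - {r})" unfolding m_def by simp
  then obtain R where R: "R \<subseteq> {0..<a} - {r}" "card R = m" "finite R"
    by (rule obtain_subset_with_card_n)
  have "card ({0..<a} - {c1,c2}) = a - 2" using rc by (simp add: card_Diff_subset)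
  then have "m - 1 \<le> card ({0..<a} - {c1,c2})" unfolding m_def by simp
  then obtain C' where C': "C' \<subseteq> {0..<a} - {c1,c2}" "card C' = m - 1" "finite C'"
    by (rule obtain_subset_with_card_n)
  define C where "C = insert c1 C'"
  have m1: "m \<ge> 1" unfolding m_def using ak by simp
  have "c1 \<notin> C'" using C' by blast
  then have cC: "card C = m" unfolding C_def using C' m1 by simp
  have finC: "finite C" unfolding C_def using C' by simp
  have Csub: "C \<subseteq> {0..<a}" "c1 \<in> C" "c2 \<notin> C" unfolding C_def using C' rc by auto
  have Rsub: "R \<subseteq> {0..<a}" "r \<notin> R" using R by auto
  obtain g where g: "bij_betw g R C" using finite_same_card_bij[of R C] R finC cC by auto
  define S where "S = (\<lambda>i. (i, g i)) ` R"
  have cS: "card S = m" unfolding S_def using R by (subst card_image) (auto simp: inj_on_def)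
  have gR: "g ` R = C" using g by (simp add: bij_betw_def)
  have SV: "S \<subseteq> V"
  proof
    fix s assume "s \<in> S"
    then obtain i where i: "i \<in> R" "s = (i, g i)" unfolding S_def by blast
    then have "g i \<in> C" using gR by blast
    then show "s \<in> V" using i Csub(1) Rsub(1) unfolding V_def rv by auto
  qed
  define U1 where "U1 = {0..<a} - R"
  define U2 where "U2 = {0..<a} - C"
  have cU1: "card (U1 - {r}) = k"
  proof -
    have "U1 - {r} = {0..<a} - insert r R" unfolding U1_def by auto
    moreover have "card (insert r R) = m + 1" using R Rsub by simp
    moreover have "insert r R \<subseteq> {0..<a}" using R rc by auto
    ultimately show ?thesis using R(3) ak unfolding m_def by (simp add: card_Diff_subset)
  qed
  have cU2: "card (U2 - {c2}) = k"
  proof -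
    have "U2 - {c2} = {0..<a} - insert c2 C" unfolding U2_def by auto
    moreover have "card (insert c2 C) = m + 1" using cC finC Csub by simp
    moreover have "insert c2 C \<subseteq> {0..<a}" using Csub rc by auto
    ultimately show ?thesis using finC ak unfolding m_def by (simp add: card_Diff_subset)
  qed
  have ninE: "s \<notin> e" if "fst s \<in> R" for s using that Rsub unfolding e_def by auto
  define X0 where "X0 = {p \<in> V. fst p \<in> R \<or> snd p \<in> C}"
  have X0: "X0 \<subseteq> pd_step V E k S 0"
  proof
    fix p assume p: "p \<in> X0"
    have "\<exists>s\<in>S. p \<in> cnbhd V E s"
    proof (cases "fst p \<in> R")
      case True
      define s where "s = (fst p, g (fst p))"
      have sS: "s \<in> S" unfolding s_def S_def using True by blast
      have "s \<in> V" using sS SV by blast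
      moreover have "{p, s} \<noteq> e" using ninE[of s] True unfolding s_def by auto
      ultimately have "p \<in> cnbhd V E s" using p unfolding X0_def V_def E_def
        by (intro nbI) (auto simp: s_def)
      then show ?thesis using sS by blast
    next
      case False
      then have "snd p \<in> C" using p unfolding X0_def by auto
      then obtain i where i: "i \<in> R" "g i = snd p" using gR by auto
      define s where "s = (i, snd p)"
      have sS: "s \<in> S" unfolding s_def S_def using i by force
      have "s \<in> V" using sS SV by blast
      moreover have "{p, s} \<noteq> e" using ninE[of s] i unfolding s_def by auto
      ultimately have "p \<in> cnbhd V E s" using p unfolding X0_def V_def E_def
        by (intro nbI) (auto simp: s_def)
      then show ?thesis using sS by blast
    qed
    then show "p \<in> pd_step V E k S 0" by (auto simp: cnbhd_set_def)
  qed
  have v1: "(r, c1) \<in> X0" unfolding X0_def V_def using rc Csub by (auto simp: rv)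
  have "cnbhd V E (r, c1) - X0 \<subseteq> (\<lambda>j. (r, j)) ` (U2 - {c2})"
  proof
    fix p assume p: "p \<in> cnbhd V E (r, c1) - X0"
    then have pn: "p \<noteq> (r, c1)" using v1 by blast
    have pN: "p \<in> cnbhd V E (r, c1)" "p \<notin> X0" using p by blast+
    have "p \<in> rook_vertices a \<and> (fst p = r \<or> snd p = c1) \<and> {p, (r,c1)} \<noteq> e"
      using pN(1) pn unfolding V_def E_def nb by simp
    then have pV: "p \<in> V" "fst p = r \<or> snd p = c1" "{p, (r,c1)} \<noteq> e"
      unfolding V_def by blast+
    have nR: "fst p \<notin> R" "snd p \<notin> C" using pN(2) pV(1) unfolding X0_def by blast+
    have fr: "fst p = r" using pV(2) nR(2) Csub(2) by metis
    have "snd p \<noteq> c2"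
    proof
      assume "snd p = c2"
      then have "p = (r, c2)" using fr by (cases p) simp
      then show False using pV(3) unfolding e_def by (simp add: insert_commute)
    qed
    moreover have "snd p < a" using pV(1) unfolding V_def rv by blast
    ultimately have "snd p \<in> U2 - {c2}" using nR(2) unfolding U2_def by simp
    moreover have "p = (r, snd p)" using fr by (cases p) simp
    ultimately show "p \<in> (\<lambda>j. (r, j)) ` (U2 - {c2})" by blast
  qed
  then have "card (cnbhd V E (r, c1) - X0) \<le> card ((\<lambda>j. (r, j)) ` (U2 - {c2}))"
    by (rule card_mono[rotated]) (simp add: U2_def)
  also have "\<dots> \<le> k" using card_image_le[of "U2 - {c2}" "\<lambda>j. (r, j)"] cU2 unfolding U2_def by simp
  finally have N1: "cnbhd V E (r, c1) \<subseteq> pd_step V E k S 1"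
    using pd_force[OF finV X0 v1] by simp
  define X1 where "X1 = X0 \<union> {p \<in> V. fst p = r \<and> snd p \<noteq> c2}"
  have X1: "X1 \<subseteq> pd_step V E k S 1"
  proof -
    have "X0 \<subseteq> pd_step V E k S 1" using X0 pd_step_mono_Suc[of V E k S 0] by simp
    moreover have "p \<in> pd_step V E k S 1" if "p \<in> V" "fst p = r" "snd p \<noteq> c2" for p
    proof -
      have "p \<in> cnbhd V E (r, c1)" unfolding V_def E_def
      proof (rule nbI)
        show "p \<in> rook_vertices a" "(r, c1) \<in> rook_vertices a" using that rc unfolding V_def by (auto simp: rv)
        show "fst p = fst (r, c1) \<or> snd p = snd (r, c1)" using that by simp
        show "{p, (r, c1)} \<noteq> e" using that unfolding e_def by (cases p) (auto simp: doubleton_eq_iff)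
      qed
      then show ?thesis using N1 by blast
    qed
    ultimately show ?thesis unfolding X1_def by blast
  qed
  obtain i0 where i0: "i0 \<in> R" using R m1 by fastforce
  have N2: "(i, j) \<in> pd_step V E k S 2" if ij: "i < a" "j \<in> U2 - {c2}" for i j
  proof -
    have vX: "(i0, j) \<in> X1" using i0 Rsub ij unfolding X1_def X0_def V_def U2_def by (auto simp: rv)
    have "cnbhd V E (i0, j) - X1 \<subseteq> (\<lambda>i. (i, j)) ` (U1 - {r})"
    proof
      fix p assume p: "p \<in> cnbhd V E (i0, j) - X1"
      then have pn: "p \<noteq> (i0, j)" using vX by blast
      have pN: "p \<in> cnbhd V E (i0, j)" "p \<notin> X1" using p by blast+
      have "p \<in> rook_vertices a \<and> (fst p = i0 \<or> snd p = j)"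
        using pN(1) pn unfolding V_def E_def nb by simp
      then have pV: "p \<in> V" "fst p = i0 \<or> snd p = j" unfolding V_def by blast+
      have nR: "fst p \<notin> R" "snd p \<notin> C" using pN(2) pV(1) unfolding X1_def X0_def by blast+
      have sj: "snd p = j" using pV(2) nR(1) i0 by metis
      have "fst p \<noteq> r"
      proof
        assume "fst p = r"
        then have "p \<in> X1" using pV(1) sj ij(2) unfolding X1_def by simp
        then show False using pN(2) by blast
      qed
      moreover have "fst p < a" using pV(1) unfolding V_def rv by blast
      ultimately have "fst p \<in> U1 - {r}" using nR(1) unfolding U1_def by simp
      moreover have "p = (fst p, j)" using sj by (cases p) simp
      ultimately show "p \<in> (\<lambda>i. (i, j)) ` (U1 - {r})" by blast
    qed
    then have "card (cnbhd V E (i0, j) - X1) \<le> card ((\<lambda>i. (i, j)) ` (U1 - {r}))"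
      by (rule card_mono[rotated]) (simp add: U1_def)
    also have "\<dots> \<le> k" using card_image_le[of "U1 - {r}" "\<lambda>i. (i, j)"] cU1 unfolding U1_def by simp
    finally have "cnbhd V E (i0, j) \<subseteq> pd_step V E k S (Suc 1)"
      using pd_force[OF finV X1 vX] by simp
    moreover have "(i, j) \<in> cnbhd V E (i0, j)" unfolding V_def E_def
    proof (rule nbI)
      show "(i, j) \<in> rook_vertices a" "(i0, j) \<in> rook_vertices a" using ij i0 Rsub unfolding U2_def by (auto simp: rv)
      show "fst (i, j) = fst (i0, j) \<or> snd (i, j) = snd (i0, j)" by simp
      show "{(i, j), (i0, j)} \<noteq> e" using ij Csub unfolding e_def U2_def by (auto simp: doubleton_eq_iff)
    qed
    ultimately show ?thesis by (simp add: numeral_2_eq_2 subset_iff)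
  qed
  define X2 where "X2 = {p \<in> V. snd p \<noteq> c2}"
  have X2: "X2 \<subseteq> pd_step V E k S 2"
  proof
    fix p assume p: "p \<in> X2"
    show "p \<in> pd_step V E k S 2"
    proof (cases "snd p \<in> C")
      case True
      then have "p \<in> X0" using p unfolding X2_def X0_def by auto
      then show ?thesis using X0 pd_step_mono[of 0 2 V E k S] by auto
    next
      case False
      then have "snd p \<in> U2 - {c2}" using p unfolding X2_def U2_def V_def by (auto simp: rv)
      moreover have "fst p < a" using p unfolding X2_def V_def by (auto simp: rv)
      ultimately show ?thesis using N2[of "fst p" "snd p"] by simp
    qed
  qed
  obtain j0 where j0: "j0 \<in> U2 - {c2}" using cU2 k1 by (metis card.empty ex_in_conv not_one_le_zero)
  have N3: "(i, c2) \<in> pd_step V E k S 3" if i: "i < a" for i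
  proof -
    have vX: "(i, j0) \<in> X2" using i j0 unfolding X2_def V_def U2_def by (auto simp: rv)
    have "cnbhd V E (i, j0) - X2 \<subseteq> {(i, c2)}"
    proof
      fix p assume p: "p \<in> cnbhd V E (i, j0) - X2"
      then have pn: "p \<noteq> (i, j0)" using vX by blast
      have pN: "p \<in> cnbhd V E (i, j0)" "p \<notin> X2" using p by blast+
      have "p \<in> rook_vertices a \<and> (fst p = i \<or> snd p = j0)"
        using pN(1) pn unfolding V_def E_def nb by simp
      then have pV: "p \<in> V" "fst p = i \<or> snd p = j0" unfolding V_def by blast+
      have sc: "snd p = c2" using pN(2) pV(1) unfolding X2_def by blast
      then have "fst p = i" using pV(2) j0 by auto
      then show "p \<in> {(i, c2)}" using sc by (cases p) simp
    qed
    then have "card (cnbhd V E (i, j0) - X2) \<le> card {(i, c2)}"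
      by (rule card_mono[rotated]) simp
    then have "card (cnbhd V E (i, j0) - X2) \<le> k" using k1 by simp
    then have "cnbhd V E (i, j0) \<subseteq> pd_step V E k S (Suc 2)"
      using pd_force[OF finV X2 vX] by simp
    moreover have "(i, c2) \<in> cnbhd V E (i, j0)" unfolding V_def E_def
    proof (rule nbI)
      show "(i, c2) \<in> rook_vertices a" "(i, j0) \<in> rook_vertices a" using i j0 rc unfolding U2_def by (auto simp: rv)
      show "fst (i, c2) = fst (i, j0) \<or> snd (i, c2) = snd (i, j0)" by simp
      show "{(i, c2), (i, j0)} \<noteq> e" using j0 Csub rc unfolding e_def U2_def by (auto simp: doubleton_eq_iff)
    qed
    ultimately show ?thesis by (simp add: numeral_3_eq_3 subset_iff)
  qed
  have "V \<subseteq> pd_step V E k S 3"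
  proof
    fix p assume p: "p \<in> V"
    show "p \<in> pd_step V E k S 3"
    proof (cases "snd p = c2")
      case True
      then show ?thesis using N3[of "fst p"] p unfolding V_def by (cases p) (auto simp: rv)
    next
      case False
      then have "p \<in> X2" using p unfolding X2_def by auto
      then show ?thesis using X2 pd_step_mono[of 2 3 V E k S] by auto
    qed
  qed
  then have "pd_closure V E k S = V" using pd_step_V[OF SV, of E k]
    unfolding pd_closure_def by blast
  then have "k_power_dominating V E k S" using SV unfolding k_power_dominating_def by simp
  then show ?thesis using cS unfolding V_def E_def e_def m_def by blast
qed


lemma cnbhd_img:
  fixes f :: "'a \<Rightarrow> 'b"
  assumes "inj f"
  shows "cnbhd (f ` V) ((`) f ` E) (f v) = f ` cnbhd V E v"
proof -
  have eq: "{f x, f v} \<in> (`) f ` E \<longleftrightarrow> {x, v} \<in> E" for x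
  proof -
    have 1: "{f x, f v} = f ` {x, v}" by simp
    have 2: "f ` A = f ` B \<longleftrightarrow> A = B" for A B using assms by (simp add: inj_image_eq_iff)
    show ?thesis unfolding 1 image_iff using 2 by metis
  qed
  show ?thesis
  proof (rule set_eqI)
    fix u
    show "u \<in> cnbhd (f ` V) ((`) f ` E) (f v) \<longleftrightarrow> u \<in> f ` cnbhd V E v"
    proof
      assume "u \<in> cnbhd (f ` V) ((`) f ` E) (f v)"
      then have "u = f v \<or> (u \<in> f ` V \<and> {u, f v} \<in> (`) f ` E)" unfolding cnbhd_def by blast
      then show "u \<in> f ` cnbhd V E v" unfolding cnbhd_def using eq by blast
    next
      assume "u \<in> f ` cnbhd V E v"
      then obtain x where "u = f x" "x = v \<or> (x \<in> V \<and> {x, v} \<in> E)" unfolding cnbhd_def by blast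
      then show "u \<in> cnbhd (f ` V) ((`) f ` E) (f v)" unfolding cnbhd_def using eq by blast
    qed
  qed
qed

lemma pd_step_img:
  fixes f :: "'a \<Rightarrow> 'b"
  assumes "inj f"
  shows "pd_step (f ` V) ((`) f ` E) k (f ` S) i = f ` pd_step V E k S i"
proof (induction i)
  case 0
  show ?case unfolding pd_step.simps cnbhd_set_def using cnbhd_img[OF assms, of V E]
    by (simp add: image_UN)
next
  case (Suc i)
  let ?P = "pd_step V E k S i"
  have cd: "card (cnbhd (f ` V) ((`) f ` E) (f v) - f ` ?P) = card (cnbhd V E v - ?P)" for v
    using assms by (simp add: cnbhd_img image_set_diff[symmetric] card_image inj_on_subset[of f UNIV])
  show ?case
  proof
    show "pd_step (f ` V) ((`) f ` E) k (f ` S) (Suc i) \<subseteq> f ` pd_step V E k S (Suc i)"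
    proof
      fix w assume "w \<in> pd_step (f ` V) ((`) f ` E) k (f ` S) (Suc i)"
      then obtain u where u: "w \<in> cnbhd (f ` V) ((`) f ` E) u" "u \<in> f ` ?P"
        "card (cnbhd (f ` V) ((`) f ` E) u - f ` ?P) \<le> k" using Suc by auto
      then obtain v where v: "u = f v" "v \<in> ?P" by blast
      have "card (cnbhd V E v - ?P) \<le> k" using u(3) cd[of v] v by simp
      then have "cnbhd V E v \<subseteq> pd_step V E k S (Suc i)" using v(2) by (intro pd_step_Suc_I)
      moreover have "w \<in> f ` cnbhd V E v" using u(1) v(1) cnbhd_img[OF assms] by simp
      ultimately show "w \<in> f ` pd_step V E k S (Suc i)" by blast
    qed
  next
    show "f ` pd_step V E k S (Suc i) \<subseteq> pd_step (f ` V) ((`) f ` E) k (f ` S) (Suc i)"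
    proof
      fix w assume "w \<in> f ` pd_step V E k S (Suc i)"
      then obtain x v where xv: "w = f x" "x \<in> cnbhd V E v" "v \<in> ?P" "card (cnbhd V E v - ?P) \<le> k"
        by auto
      have "f v \<in> pd_step (f ` V) ((`) f ` E) k (f ` S) i" using Suc xv(3) by simp
      moreover have "card (cnbhd (f ` V) ((`) f ` E) (f v) - pd_step (f ` V) ((`) f ` E) k (f ` S) i) \<le> k"
        using Suc cd[of v] xv(4) by simp
      ultimately have "cnbhd (f ` V) ((`) f ` E) (f v) \<subseteq> pd_step (f ` V) ((`) f ` E) k (f ` S) (Suc i)"
        by (intro pd_step_Suc_I)
      moreover have "w \<in> cnbhd (f ` V) ((`) f ` E) (f v)" using xv(1,2) cnbhd_img[OF assms] by simp
      ultimately show "w \<in> pd_step (f ` V) ((`) f ` E) k (f ` S) (Suc i)" by blast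
    qed
  qed
qed

lemma kpd_img:
  fixes f :: "'a \<Rightarrow> 'b"
  assumes "inj f" "k_power_dominating V E k S"
  shows "k_power_dominating (f ` V) ((`) f ` E) k (f ` S)"
proof -
  have "S \<subseteq> V" "(\<Union>i. pd_step V E k S i) = V" using assms(2)
    unfolding k_power_dominating_def pd_closure_def by blast+
  moreover have "(\<Union>i. pd_step (f ` V) ((`) f ` E) k (f ` S) i) = f ` (\<Union>i. pd_step V E k S i)"
    unfolding pd_step_img[OF assms(1)] image_UN by (rule refl)
  ultimately show ?thesis unfolding k_power_dominating_def pd_closure_def by (simp add: image_mono)
qed

lemma swapV: "prod.swap ` rook_vertices a = rook_vertices a"
  unfolding rook_vertices_def by (simp add: product_swap)

lemma swapE_sub: "(`) prod.swap ` rook_edges a \<subseteq> rook_edges a"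
proof
  fix F assume "F \<in> (`) prod.swap ` rook_edges a"
  then obtain x y where F: "F = prod.swap ` {x, y}" "x \<in> rook_vertices a" "y \<in> rook_vertices a" "x \<noteq> y"
    "fst x = fst y \<or> snd x = snd y" unfolding rook_edges_def by blast
  have F2: "F = {prod.swap x, prod.swap y}" using F(1) by simp
  have "prod.swap x \<in> rook_vertices a" "prod.swap y \<in> rook_vertices a" using F(2,3) by (simp_all add: rv)
  moreover have "prod.swap x \<noteq> prod.swap y" using F(4) by (metis swap_swap)
  moreover have "fst (prod.swap x) = fst (prod.swap y) \<or> snd (prod.swap x) = snd (prod.swap y)" using F(5) by auto
  ultimately show "F \<in> rook_edges a" unfolding F2 rook_adj by blast
qed

lemma swapE: "(`) prod.swap ` rook_edges a = rook_edges a"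
proof
  show "(`) prod.swap ` rook_edges a \<subseteq> rook_edges a" by (rule swapE_sub)
  have "rook_edges a = (`) prod.swap ` ((`) prod.swap ` rook_edges a)"
    by (simp add: image_image)
  also have "\<dots> \<subseteq> (`) prod.swap ` rook_edges a" by (rule image_mono[OF swapE_sub])
  finally show "rook_edges a \<subseteq> (`) prod.swap ` rook_edges a" .
qed

lemma upper:
  assumes k1: "k \<ge> 1" and ak: "a \<ge> k + 2" and e: "e \<in> rook_edges a"
  shows "\<exists>S. k_power_dominating (rook_vertices a) (rook_edges a - {e}) k S \<and> card S = a - k - 1"
proof -
  obtain x y where xy: "e = {x, y}" "x \<in> rook_vertices a" "y \<in> rook_vertices a" "x \<noteq> y"
    "fst x = fst y \<or> snd x = snd y" using e unfolding rook_edges_def by blast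
  show ?thesis
  proof (cases "fst x = fst y")
    case True
    then have "snd x \<noteq> snd y" using xy(4) by (cases x, cases y) auto
    moreover have "e = {(fst x, snd x), (fst x, snd y)}" using xy(1) True by (cases x, cases y) simp
    ultimately show ?thesis using upper_row[OF k1 ak, of "fst x" "snd x" "snd y"] xy(2,3)
      by (simp add: rv)
  next
    case False
    then have sn: "snd x = snd y" using xy(5) by simp
    define e' where "e' = {(snd x, fst x), (snd x, fst y)}"
    obtain S' where S': "k_power_dominating (rook_vertices a) (rook_edges a - {e'}) k S'" "card S' = a - k - 1"
      using upper_row[OF k1 ak, of "snd x" "fst x" "fst y"] xy(2,3) False unfolding e'_def by (auto simp: rv)
    have ee: "prod.swap ` e' = e" unfolding e'_def xy(1) using sn by (cases x, cases y) auto
    have "k_power_dominating (prod.swap ` rook_vertices a) ((`) prod.swap ` (rook_edges a - {e'})) k (prod.swap ` S')"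
      by (rule kpd_img[OF _ S'(1)]) simp
    moreover have "(`) prod.swap ` (rook_edges a - {e'}) = rook_edges a - {e}"
    proof -
      have "inj ((`) (prod.swap :: nat \<times> nat \<Rightarrow> nat \<times> nat))"
        by (rule injI) (simp add: inj_image_eq_iff)
      then have "(`) prod.swap ` (rook_edges a - {e'}) = (`) prod.swap ` rook_edges a - (`) prod.swap ` {e'}"
        by (rule image_set_diff)
      then show ?thesis using swapE ee by simp
    qed
    moreover have "card (prod.swap ` S') = card S'" by (simp add: card_image)
    ultimately show ?thesis using S'(2) swapV by metis
  qed
qed

theorem mainTheorem7:
  fixes k a :: nat and e :: "(nat \<times> nat) set"
  assumes "k \<ge> 1" and "a \<ge> k + 2" and "e \<in> rook_edges a"
  shows "k_power_domination_number (rook_vertices a) (rook_edges a - {e}) k = a - k - 1"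
  unfolding k_power_domination_number_def
proof (rule Least_equality)
  show "\<exists>S. k_power_dominating (rook_vertices a) (rook_edges a - {e}) k S \<and> card S = a - k - 1"
    by (rule upper[OF assms])
next
  fix n assume "\<exists>S. k_power_dominating (rook_vertices a) (rook_edges a - {e}) k S \<and> card S = n"
  then obtain S where S: "k_power_dominating (rook_vertices a) (rook_edges a - {e}) k S" "card S = n" by blast
  show "a - k - 1 \<le> n"
  proof (rule ccontr)
    assume "\<not> a - k - 1 \<le> n"
    then have "card S + k + 2 \<le> a" using S(2) by simp
    moreover have "S \<subseteq> rook_vertices a" using S(1) unfolding k_power_dominating_def by blast
    ultimately have "pd_closure (rook_vertices a) (rook_edges a - {e}) k S \<noteq> rook_vertices a"
      by (intro lower)
    then show False using S(1) unfolding k_power_dominating_def by blast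
  qed
qed

end
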